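(* Let $X,Y$ be $L$-topological spaces and $f:X\to Y$ a continuous map. Then $f$ is a quasihomeomorphism if and only if the map ${\rm pt}_L\mathcal O(f):{\rm pt}_L\mathcal O(X)\to{\rm pt}_L\mathcal O(Y)$, $p\mapsto p\circ f^\leftarrow$, is a homeomorphism (with respect to the spectral $L$-topologies).
   Context: $L$ is a frame. $L$-subsets of $X$ are maps $X\to L$; $a_X$ constant. An $L$-topology on $X$ is $\mathcal O(X)\subseteq L^X$ closed under finite meets and arbitrary joins containing all constants; $f$ continuous if $f^\leftarrow(B)=B\circ f$ is open for every open $B$; here $f^\leftarrow$ is regarded as a map $\mathcal O(Y)\to\mathcal O(X)$. $f$ is a quasihomeomorphism if $f^\leftarrow:\mathcal O(Y)\to\mathcal O(X)$ is a bijection. A point of $\mathcal O(X)$ is $p:\mathcal O(X)\to L$ preserving binary meets and arbitrary joins with $p(\lambda_X)=\lambda$ for all $\lambda\in L$; ${\rm pt}_L\mathcal O(X)$ is the set of points, carrying the spectral $L$-topology $\{\phi(A):A\in\mathcal O(X)\}$ with $\phi(A)(p)=p(A)$. A homeomorphism is a bijection that is continuous with continuous inverse. *)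

theory Defs
  imports "HOL-Library.FuncSet"
begin

class frame = complete_lattice +
  assumes inf_Sup_frame: "inf a (Sup S) = (SUP b\<in>S. inf a b)"

text \<open>L-subsets of a carrier X are (extensional) maps X \<rightarrow> L.\<close>

definition Lconst :: "'a set \<Rightarrow> 'l \<Rightarrow> ('a \<Rightarrow> 'l)" where
  "Lconst X c = restrict (\<lambda>_. c) X"

definition Lmeet :: "'a set \<Rightarrow> ('a \<Rightarrow> 'l::frame) \<Rightarrow> ('a \<Rightarrow> 'l) \<Rightarrow> ('a \<Rightarrow> 'l)" where
  "Lmeet X A B = restrict (\<lambda>x. inf (A x) (B x)) X"

definition Ljoin :: "'a set \<Rightarrow> ('a \<Rightarrow> 'l::frame) set \<Rightarrow> ('a \<Rightarrow> 'l)" where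
  "Ljoin X S = restrict (\<lambda>x. SUP A\<in>S. A x) X"

definition Ltopology :: "'a set \<Rightarrow> ('a \<Rightarrow> 'l::frame) set \<Rightarrow> bool" where
  "Ltopology X T \<longleftrightarrow>
     T \<subseteq> extensional X \<and>
     (\<forall>c. Lconst X c \<in> T) \<and>
     (\<forall>A\<in>T. \<forall>B\<in>T. Lmeet X A B \<in> T) \<and>
     (\<forall>S. S \<subseteq> T \<longrightarrow> Ljoin X S \<in> T)"

definition Lpreimage :: "'a set \<Rightarrow> ('a \<Rightarrow> 'b) \<Rightarrow> ('b \<Rightarrow> 'l) \<Rightarrow> ('a \<Rightarrow> 'l)" where
  "Lpreimage X f B = restrict (B \<circ> f) X"

definition Lcontinuous ::
  "'a set \<Rightarrow> ('a \<Rightarrow> 'l::frame) set \<Rightarrow> 'b set \<Rightarrow> ('b \<Rightarrow> 'l) set \<Rightarrow> ('a \<Rightarrow> 'b) \<Rightarrow> bool" where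
  "Lcontinuous X OX Y OY f \<longleftrightarrow> f \<in> X \<rightarrow> Y \<and> (\<forall>B\<in>OY. Lpreimage X f B \<in> OX)"

definition Lquasihomeomorphism ::
  "'a set \<Rightarrow> ('a \<Rightarrow> 'l::frame) set \<Rightarrow> 'b set \<Rightarrow> ('b \<Rightarrow> 'l) set \<Rightarrow> ('a \<Rightarrow> 'b) \<Rightarrow> bool" where
  "Lquasihomeomorphism X OX Y OY f \<longleftrightarrow> bij_betw (Lpreimage X f) OY OX"

definition Lhomeomorphism ::
  "'a set \<Rightarrow> ('a \<Rightarrow> 'l::frame) set \<Rightarrow> 'b set \<Rightarrow> ('b \<Rightarrow> 'l) set \<Rightarrow> ('a \<Rightarrow> 'b) \<Rightarrow> bool" where
  "Lhomeomorphism X OX Y OY f \<longleftrightarrow>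
     bij_betw f X Y \<and> Lcontinuous X OX Y OY f \<and>
     Lcontinuous Y OY X OX (the_inv_into X f)"

definition Lpoints :: "'a set \<Rightarrow> ('a \<Rightarrow> 'l::frame) set \<Rightarrow> (('a \<Rightarrow> 'l) \<Rightarrow> 'l) set" where
  "Lpoints X T = {p. p \<in> extensional T \<and>
     (\<forall>A\<in>T. \<forall>B\<in>T. p (Lmeet X A B) = inf (p A) (p B)) \<and>
     (\<forall>S. S \<subseteq> T \<longrightarrow> p (Ljoin X S) = (SUP A\<in>S. p A)) \<and>
     (\<forall>c. p (Lconst X c) = c)}"

definition Lphi :: "'a set \<Rightarrow> ('a \<Rightarrow> 'l::frame) set \<Rightarrow> ('a \<Rightarrow> 'l) \<Rightarrow> ((('a \<Rightarrow> 'l) \<Rightarrow> 'l) \<Rightarrow> 'l)" where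
  "Lphi X T A = restrict (\<lambda>p. p A) (Lpoints X T)"

definition Lspectral :: "'a set \<Rightarrow> ('a \<Rightarrow> 'l::frame) set \<Rightarrow> ((('a \<Rightarrow> 'l) \<Rightarrow> 'l) \<Rightarrow> 'l) set" where
  "Lspectral X T = Lphi X T ` T"

definition Lptmap :: "'a set \<Rightarrow> ('b \<Rightarrow> 'l) set \<Rightarrow> ('a \<Rightarrow> 'b) \<Rightarrow> (('a \<Rightarrow> 'l) \<Rightarrow> 'l) \<Rightarrow> (('b \<Rightarrow> 'l) \<Rightarrow> 'l)" where
  "Lptmap X OY f p = restrict (\<lambda>B. p (Lpreimage X f B)) OY"

end

theory Submission
  imports Defs
begin

lemma pre_meet:
  assumes "f \<in> X \<rightarrow> Y"
  shows "Lpreimage X f (Lmeet Y A B) = Lmeet X (Lpreimage X f A) (Lpreimage X f B)"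
  using assms by (auto simp: Lpreimage_def Lmeet_def restrict_def fun_eq_iff)

lemma pre_join:
  assumes "f \<in> X \<rightarrow> Y"
  shows "Lpreimage X f (Ljoin Y S) = Ljoin X (Lpreimage X f ` S)"
proof -
  have "(SUP A\<in>Lpreimage X f ` S. A x) = (SUP B\<in>S. B (f x))" if "x \<in> X" for x
    using that by (simp add: image_comp Lpreimage_def comp_def)
  then show ?thesis using assms
    by (auto simp: Lpreimage_def Ljoin_def restrict_def fun_eq_iff)
qed

lemma pre_const:
  assumes "f \<in> X \<rightarrow> Y"
  shows "Lpreimage X f (Lconst Y c) = Lconst X c"
  using assms by (auto simp: Lpreimage_def Lconst_def restrict_def fun_eq_iff)

lemma eval_point:
  assumes "x \<in> X" and T: "Ltopology X T"
  shows "restrict (\<lambda>A. A x) T \<in> Lpoints X T"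
proof -
  note TT = T[unfolded Ltopology_def]
  have m: "\<forall>A\<in>T. \<forall>B\<in>T. Lmeet X A B \<in> T" and j: "\<forall>S. S \<subseteq> T \<longrightarrow> Ljoin X S \<in> T"
    and c: "\<forall>c. Lconst X c \<in> T" using TT by auto
  have j2: "(SUP A\<in>S. restrict (\<lambda>A. A x) T A) = (SUP A\<in>S. A x)" if "S \<subseteq> T" for S
    using that by (intro SUP_cong) auto
  show ?thesis unfolding Lpoints_def
    using assms m j c j2 by (auto simp: Lmeet_def Ljoin_def Lconst_def)
qed

lemma ext_eq:
  assumes "A \<in> extensional X" "B \<in> extensional X" "\<And>x. x \<in> X \<Longrightarrow> A x = B x"
  shows "A = B"
  using assms by (rule extensionalityI)

lemma ptmap_points:
  assumes TX: "Ltopology X OX" and TY: "Ltopology Y OY"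
    and C: "Lcontinuous X OX Y OY f" and p: "p \<in> Lpoints X OX"
  shows "Lptmap X OY f p \<in> Lpoints Y OY"
proof -
  have fXY: "f \<in> X \<rightarrow> Y" and preO: "\<And>B. B \<in> OY \<Longrightarrow> Lpreimage X f B \<in> OX"
    using C by (auto simp: Lcontinuous_def)
  note Y = TY[unfolded Ltopology_def]
  note P = p[unfolded Lpoints_def, simplified]
  let ?q = "Lptmap X OY f p"
  have m: "?q (Lmeet Y A B) = inf (?q A) (?q B)" if "A \<in> OY" "B \<in> OY" for A B
    using that Y P preO by (simp add: Lptmap_def pre_meet[OF fXY])
  have j: "?q (Ljoin Y S) = (SUP A\<in>S. ?q A)" if "S \<subseteq> OY" for S
  proof -
    have "?q (Ljoin Y S) = p (Ljoin X (Lpreimage X f ` S))"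
      using that Y by (simp add: Lptmap_def pre_join[OF fXY])
    also have "\<dots> = (SUP A\<in>Lpreimage X f ` S. p A)"
    proof -
      have Pj: "\<forall>S. S \<subseteq> OX \<longrightarrow> p (Ljoin X S) = (SUP A\<in>S. p A)" using P by simp
      have "Lpreimage X f ` S \<subseteq> OX" using that preO by auto
      then show ?thesis using Pj by simp
    qed
    also have "\<dots> = (SUP A\<in>S. ?q A)"
      using that unfolding image_comp by (intro SUP_cong) (auto simp: Lptmap_def)
    finally show ?thesis .
  qed
  have c: "?q (Lconst Y c) = c" for c
    using Y P by (simp add: Lptmap_def pre_const[OF fXY])
  show ?thesis using m j c by (auto simp: Lpoints_def Lptmap_def)
qed

theorem proposition3p11:
  fixes X :: "'a set" and OX :: "('a \<Rightarrow> 'l::frame) set"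
    and Y :: "'b set" and OY :: "('b \<Rightarrow> 'l) set" and f :: "'a \<Rightarrow> 'b"
  assumes "Ltopology X OX" and "Ltopology Y OY"
    and "Lcontinuous X OX Y OY f"
  shows "Lquasihomeomorphism X OX Y OY f \<longleftrightarrow>
         Lhomeomorphism (Lpoints X OX) (Lspectral X OX) (Lpoints Y OY) (Lspectral Y OY)
           (Lptmap X OY f)"
proof -
  have fXY: "f \<in> X \<rightarrow> Y" and preO: "\<And>B. B \<in> OY \<Longrightarrow> Lpreimage X f B \<in> OX"
    using assms(3) by (auto simp: Lcontinuous_def)
  note TX = assms(1)[unfolded Ltopology_def]
  note TY = assms(2)[unfolded Ltopology_def]
  let ?pre = "Lpreimage X f"
  let ?pt = "Lptmap X OY f"
  let ?PX = "Lpoints X OX"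
  let ?PY = "Lpoints Y OY"
  have ptP: "?pt p \<in> ?PY" if "p \<in> ?PX" for p
    using ptmap_points[OF assms that] .
  have ptB: "?pt p B = p (?pre B)" if "B \<in> OY" for p B
    using that by (simp add: Lptmap_def)
  have extPX: "p \<in> extensional OX" if "p \<in> ?PX" for p
    using that by (simp add: Lpoints_def)
  have extPY: "q \<in> extensional OY" if "q \<in> ?PY" for q
    using that by (simp add: Lpoints_def)
  show ?thesis
  proof
    assume "Lquasihomeomorphism X OX Y OY f"
    then have bij: "bij_betw ?pre OY OX" by (simp add: Lquasihomeomorphism_def)
    then have inj: "inj_on ?pre OY" and im: "?pre ` OY = OX"
      by (auto simp: bij_betw_def)
    define g where "g = the_inv_into OY ?pre"
    have gO: "g A \<in> OY" and pg: "?pre (g A) = A" if "A \<in> OX" for A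
      using that inj im unfolding g_def by (metis the_inv_into_into subset_refl, metis f_the_inv_into_f)
    have gp: "g (?pre B) = B" if "B \<in> OY" for B
      using that inj by (simp add: g_def the_inv_into_f_f)
    have injpt: "inj_on ?pt ?PX"
    proof
      fix p p' assume p: "p \<in> ?PX" and p': "p' \<in> ?PX" and e: "?pt p = ?pt p'"
      show "p = p'"
      proof (rule ext_eq[OF extPX[OF p] extPX[OF p']])
        fix A assume A: "A \<in> OX"
        have "p A = ?pt p (g A)" using ptB gO pg A by simp
        also have "\<dots> = ?pt p' (g A)" using e by simp
        also have "\<dots> = p' A" using ptB gO pg A by simp
        finally show "p A = p' A" .
      qed
    qed
    have surjpt: "\<exists>p\<in>?PX. ?pt p = q" if q: "q \<in> ?PY" for q
    proof -
      note Q = q[unfolded Lpoints_def, simplified]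
      define p where "p = restrict (\<lambda>A. q (g A)) OX"
      have m: "p (Lmeet X A B) = inf (p A) (p B)" if "A \<in> OX" "B \<in> OX" for A B
      proof -
        have "Lmeet X A B = ?pre (Lmeet Y (g A) (g B))"
          by (simp add: pre_meet[OF fXY] pg that)
        then have "g (Lmeet X A B) = Lmeet Y (g A) (g B)"
          using gp gO that TY by simp
        then show ?thesis using that TX Q gO by (simp add: p_def)
      qed
      have j: "p (Ljoin X S) = (SUP A\<in>S. p A)" if S: "S \<subseteq> OX" for S
      proof -
        have img: "?pre ` g ` S = S" using pg S by (force simp: image_comp)
        have "Ljoin X S = ?pre (Ljoin Y (g ` S))"
          by (simp only: pre_join[OF fXY] img)
        moreover have "g ` S \<subseteq> OY" using gO S by auto
        ultimately have "g (Ljoin X S) = Ljoin Y (g ` S)"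
          using gp TY by simp
        then have "p (Ljoin X S) = q (Ljoin Y (g ` S))" using TX S by (simp add: p_def)
        also have "\<dots> = (SUP B\<in>g ` S. q B)" using Q \<open>g ` S \<subseteq> OY\<close> by blast
        also have "\<dots> = (SUP A\<in>S. p A)"
          using S unfolding image_comp by (intro SUP_cong) (auto simp: p_def)
        finally show ?thesis .
      qed
      have c: "p (Lconst X c) = c" for c
      proof -
        have "Lconst X c = ?pre (Lconst Y c)" by (rule pre_const[OF fXY, symmetric])
        then have "g (Lconst X c) = Lconst Y c" using gp TY by simp
        then show ?thesis using TX Q by (simp add: p_def)
      qed
      have pP: "p \<in> ?PX" using m j c by (auto simp: Lpoints_def p_def)
      have "?pt p = q"
      proof (rule ext_eq[OF _ extPY[OF q]])
        show "?pt p \<in> extensional OY" by (simp add: Lptmap_def)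
        fix B assume B: "B \<in> OY"
        show "?pt p B = q B" using B ptB preO gp by (simp add: p_def)
      qed
      then show ?thesis using pP by blast
    qed
    have bpt: "bij_betw ?pt ?PX ?PY"
      unfolding bij_betw_def using injpt ptP surjpt by blast
    define inv where "inv = the_inv_into ?PX ?pt"
    have invP: "inv q \<in> ?PX" and ptinv: "?pt (inv q) = q" if "q \<in> ?PY" for q
      using that bpt unfolding inv_def bij_betw_def by (metis the_inv_into_into subset_refl, metis f_the_inv_into_f)
    have c1: "Lcontinuous ?PX (Lspectral X OX) ?PY (Lspectral Y OY) ?pt"
      unfolding Lcontinuous_def
    proof (intro conjI ballI)
      show "?pt \<in> ?PX \<rightarrow> ?PY" using ptP by blast
      fix U assume "U \<in> Lspectral Y OY"
      then obtain B where B: "B \<in> OY" and U: "U = Lphi Y OY B" by (auto simp: Lspectral_def)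
      have "Lpreimage ?PX ?pt U = Lphi X OX (?pre B)"
        using B ptP ptB by (auto simp: U Lpreimage_def Lphi_def fun_eq_iff)
      then show "Lpreimage ?PX ?pt U \<in> Lspectral X OX"
        using preO B by (simp add: Lspectral_def)
    qed
    have c2: "Lcontinuous ?PY (Lspectral Y OY) ?PX (Lspectral X OX) inv"
      unfolding Lcontinuous_def
    proof (intro conjI ballI)
      show "inv \<in> ?PY \<rightarrow> ?PX" using invP by blast
      fix U assume "U \<in> Lspectral X OX"
      then obtain A where A: "A \<in> OX" and U: "U = Lphi X OX A" by (auto simp: Lspectral_def)
      have "inv q A = q (g A)" if "q \<in> ?PY" for q
        using ptB[OF gO[OF A], of "inv q"] ptinv[OF that] pg[OF A] by simp
      then have "Lpreimage ?PY inv U = Lphi Y OY (g A)"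
        using invP by (auto simp: U Lpreimage_def Lphi_def fun_eq_iff)
      then show "Lpreimage ?PY inv U \<in> Lspectral Y OY"
        using gO A by (simp add: Lspectral_def)
    qed
    show "Lhomeomorphism ?PX (Lspectral X OX) ?PY (Lspectral Y OY) ?pt"
      unfolding Lhomeomorphism_def using bpt c1 c2 by (simp add: inv_def)
  next
    assume H: "Lhomeomorphism ?PX (Lspectral X OX) ?PY (Lspectral Y OY) ?pt"
    then have bpt: "bij_betw ?pt ?PX ?PY"
      and c2: "Lcontinuous ?PY (Lspectral Y OY) ?PX (Lspectral X OX) (the_inv_into ?PX ?pt)"
      by (auto simp: Lhomeomorphism_def)
    define inv where "inv = the_inv_into ?PX ?pt"
    have invpt: "inv (?pt p) = p" if "p \<in> ?PX" for p
      using that bpt by (simp add: inv_def bij_betw_def the_inv_into_f_f)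
    have inj: "inj_on ?pre OY"
    proof
      fix B B' assume B: "B \<in> OY" and B': "B' \<in> OY" and e: "?pre B = ?pre B'"
      show "B = B'"
      proof (rule ext_eq)
        show "B \<in> extensional Y" "B' \<in> extensional Y" using B B' TY by auto
        fix y assume y: "y \<in> Y"
        define q where "q = restrict (\<lambda>A. A y) OY"
        have q: "q \<in> ?PY" using eval_point[OF y assms(2)] by (simp add: q_def)
        then obtain p where p: "p \<in> ?PX" and qp: "q = ?pt p" using bpt
          by (auto simp: bij_betw_def)
        have "B y = q B" using B by (simp add: q_def)
        also have "\<dots> = p (?pre B)" using qp ptB B by simp
        also have "\<dots> = p (?pre B')" using e by simp
        also have "\<dots> = q B'" using qp ptB B' by simp
        also have "\<dots> = B' y" using B' by (simp add: q_def)
        finally show "B y = B' y" .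
      qed
    qed
    have surj: "OX \<subseteq> ?pre ` OY"
    proof
      fix A assume A: "A \<in> OX"
      have "Lphi X OX A \<in> Lspectral X OX" using A by (simp add: Lspectral_def)
      then have "Lpreimage ?PY inv (Lphi X OX A) \<in> Lspectral Y OY"
        using c2 by (simp add: Lcontinuous_def inv_def)
      then obtain B where B: "B \<in> OY" and e: "Lpreimage ?PY inv (Lphi X OX A) = Lphi Y OY B"
        by (auto simp: Lspectral_def)
      have "A = ?pre B"
      proof (rule ext_eq)
        show "A \<in> extensional X" using A TX by auto
        show "?pre B \<in> extensional X" using preO B TX by auto
        fix x assume x: "x \<in> X"
        define p where "p = restrict (\<lambda>A. A x) OX"
        have p: "p \<in> ?PX" using eval_point[OF x assms(1)] by (simp add: p_def)
        have qP: "?pt p \<in> ?PY" using ptP p .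
        have "A x = p A" using A by (simp add: p_def)
        also have "\<dots> = Lpreimage ?PY inv (Lphi X OX A) (?pt p)"
          using qP invpt[OF p] p by (simp add: Lpreimage_def Lphi_def)
        also have "\<dots> = ?pt p B" using e qP by (simp add: Lphi_def)
        also have "\<dots> = p (?pre B)" using ptB B by simp
        also have "\<dots> = ?pre B x" using preO B by (simp add: p_def)
        finally show "A x = ?pre B x" .
      qed
      then show "A \<in> ?pre ` OY" using B by blast
    qed
    have "?pre ` OY \<subseteq> OX" using preO by blast
    then show "Lquasihomeomorphism X OX Y OY f"
      using inj surj by (auto simp: Lquasihomeomorphism_def bij_betw_def)
  qed
qed

end
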